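(* Let $(X,\mathcal{B},\mu)$ be a standard probability space and $K$ a subset of $\mathfrak{P}$. Then $$h^*_\mu(K)=\sup_{\mathcal{A}\in\mathcal{S}_K}h_\mu(\mathcal{A}),$$ where $\mathcal{S}_K$ is the collection of all sequences $(\alpha_i)_{i=1}^\infty$ of elements of $K$; moreover there is some $\mathcal{A}\in\mathcal{S}_K$ with $h^*_\mu(K)=h_\mu(\mathcal{A})$.
   Context: $\mathfrak{P}$ is the set of finite measurable partitions of $X$ (identified mod $0$); $\alpha\vee\beta=\{A\cap B\colon A\in\alpha,B\in\beta\}$; $H_\mu(\alpha)=-\sum_{A\in\alpha}\mu(A)\log\mu(A)$. For a sequence $\mathcal{A}=(\alpha_i)$ in $\mathfrak{P}$, $h_\mu(\mathcal{A})=\limsup_{n\to\infty}\frac1nH_\mu(\bigvee_{i=1}^n\alpha_i)$. For $K\subset\mathfrak{P}$, $P^*_{K,\mu}(n)=\sup_{\alpha_1,\dots,\alpha_n\in K}H_\mu(\bigvee_{i=1}^n\alpha_i)$ and $h^*_\mu(K)=\limsup_{n\to\infty}\frac1nP^*_{K,\mu}(n)$. *)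

theory Defs
  imports "HOL-Probability.Probability"
begin

text \<open>Finite measurable partitions of the space of M (a partition is a finite set of
measurable, pairwise disjoint sets covering the space; identification mod 0 is
irrelevant since all quantities below are invariant under it).\<close>
definition fin_partition :: "'a measure \<Rightarrow> 'a set set \<Rightarrow> bool" where
  "fin_partition M \<alpha> \<longleftrightarrow> finite \<alpha> \<and> \<alpha> \<subseteq> sets M \<and> disjoint \<alpha> \<and> \<Union>\<alpha> = space M"

definition part_join :: "'a set set \<Rightarrow> 'a set set \<Rightarrow> 'a set set" where
  "part_join \<alpha> \<beta> = {A \<inter> B | A B. A \<in> \<alpha> \<and> B \<in> \<beta>}"

definition part_entropy :: "'a measure \<Rightarrow> 'a set set \<Rightarrow> real" where
  "part_entropy M \<alpha> = - (\<Sum>A\<in>\<alpha>. measure M A * ln (measure M A))"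

primrec join_upto :: "'a measure \<Rightarrow> (nat \<Rightarrow> 'a set set) \<Rightarrow> nat \<Rightarrow> 'a set set" where
  "join_upto M a 0 = {space M}"
| "join_upto M a (Suc n) = part_join (join_upto M a n) (a (Suc n))"

definition seq_entropy :: "'a measure \<Rightarrow> (nat \<Rightarrow> 'a set set) \<Rightarrow> ereal" where
  "seq_entropy M a = limsup (\<lambda>n. ereal (part_entropy M (join_upto M a n) / real n))"

definition Pstar :: "'a measure \<Rightarrow> 'a set set set \<Rightarrow> nat \<Rightarrow> ereal" where
  "Pstar M K n = (SUP a \<in> {a. \<forall>i\<in>{1..n}. a i \<in> K}. ereal (part_entropy M (join_upto M a n)))"

definition hstar :: "'a measure \<Rightarrow> 'a set set set \<Rightarrow> ereal" where
  "hstar M K = limsup (\<lambda>n. Pstar M K n / ereal (real n))"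

text \<open>S_K: sequences (a_i)_{i>=1} of elements of K (index 0 is unused).\<close>
definition seqs_in :: "'a set set set \<Rightarrow> (nat \<Rightarrow> 'a set set) set" where
  "seqs_in K = {a. \<forall>i\<ge>1. a i \<in> K}"

end

theory Submission
  imports Defs
begin

lemma fp_space: "fin_partition M {space M}"
  unfolding fin_partition_def by (auto simp: disjoint_def)

lemma fp_join:
  assumes "fin_partition M a" "fin_partition M b"
  shows "fin_partition M (part_join a b)"
proof -
  have f: "part_join a b = (\<lambda>(A,B). A \<inter> B) ` (a \<times> b)"
    unfolding part_join_def by auto
  show ?thesis using assms unfolding fin_partition_def
  proof (intro conjI)
    show "finite (part_join a b)" using assms unfolding f fin_partition_def by auto
    show "part_join a b \<subseteq> sets M" using assms unfolding part_join_def fin_partition_def by auto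
    show "disjoint (part_join a b)" using assms unfolding part_join_def fin_partition_def disjoint_def
      by blast
    show "\<Union> (part_join a b) = space M" using assms unfolding part_join_def fin_partition_def
      by blast
  qed
qed

lemma fp_join_upto:
  "(\<forall>i\<in>{1..n}. fin_partition M (a i)) \<Longrightarrow> fin_partition M (join_upto M a n)"
  by (induction n) (auto intro!: fp_join fp_space)

lemma join_upto_cong:
  "(\<forall>i\<in>{1..n}. a i = b i) \<Longrightarrow> join_upto M a n = join_upto M b n"
  by (induction n) auto

lemma join_upto_sub: "C \<in> join_upto M a n \<Longrightarrow> C \<subseteq> space M"
  by (induction n arbitrary: C) (auto simp: part_join_def)

lemma join_refines:
  "\<forall>C\<in>join_upto M a (m+n). \<exists>B\<in>join_upto M (\<lambda>i. a (i+m)) n. C \<subseteq> B"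
proof (induction n)
  case 0
  then show ?case using join_upto_sub[of _ M a m] by auto
next
  case (Suc n)
  show ?case
  proof
    fix C assume "C \<in> join_upto M a (m + Suc n)"
    then obtain D A where D: "D \<in> join_upto M a (m+n)" "A \<in> a (Suc (m+n))" "C = D \<inter> A"
      by (auto simp: part_join_def)
    obtain B where B: "B \<in> join_upto M (\<lambda>i. a (i+m)) n" "D \<subseteq> B" using Suc D by blast
    have "B \<inter> A \<in> join_upto M (\<lambda>i. a (i+m)) (Suc n)"
      using B D by (auto simp: part_join_def add.commute)
    then show "\<exists>B\<in>join_upto M (\<lambda>i. a (i+m)) (Suc n). C \<subseteq> B" using B D by blast
  qed
qed

lemma entropy_refine:
  assumes fm: "finite_measure M" and g: "fin_partition M g" and b: "fin_partition M b"
    and r: "\<forall>C\<in>g. \<exists>B\<in>b. C \<subseteq> B"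
  shows "part_entropy M b \<le> part_entropy M g"
proof -
  interpret finite_measure M by fact
  have gf: "finite g" "g \<subseteq> sets M" "disjoint g" "\<Union>g = space M" using g by (auto simp: fin_partition_def)
  have bf: "finite b" "b \<subseteq> sets M" "disjoint b" "\<Union>b = space M" using b by (auto simp: fin_partition_def)
  have 1: "measure M B = (\<Sum>C\<in>g. measure M (B \<inter> C))" if "B \<in> b" for B
  proof -
    have Bs: "B \<in> sets M" using that bf by auto
    show ?thesis
      by (rule measure_real_sum_image_fn[of B g id, simplified]) (use Bs gf disjointD[OF gf(3)] in auto)
  qed
  have 2: "measure M C * ln (measure M C) \<le> (\<Sum>B\<in>b. measure M (B \<inter> C) * ln (measure M B))"
    if C: "C \<in> g" for C
  proof -
    obtain B0 where B0: "B0 \<in> b" "C \<subseteq> B0" using r C by blast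
    have "(\<Sum>B\<in>b. measure M (B \<inter> C) * ln (measure M B))
        = measure M (B0 \<inter> C) * ln (measure M B0) + (\<Sum>B\<in>b-{B0}. measure M (B \<inter> C) * ln (measure M B))"
      using B0 bf(1) by (simp add: sum.remove)
    also have "(\<Sum>B\<in>b-{B0}. measure M (B \<inter> C) * ln (measure M B)) = 0"
    proof (rule sum.neutral, rule ballI)
      fix B assume "B \<in> b - {B0}"
      then have "B \<inter> B0 = {}" using disjointD[OF bf(3)] B0 by auto
      then have "B \<inter> C = {}" using B0 by auto
      then show "measure M (B \<inter> C) * ln (measure M B) = 0" by simp
    qed
    also have "B0 \<inter> C = C" using B0 by auto
    finally have e: "(\<Sum>B\<in>b. measure M (B \<inter> C) * ln (measure M B)) = measure M C * ln (measure M B0)"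
      by simp
    have "measure M C * ln (measure M C) \<le> measure M C * ln (measure M B0)"
    proof (cases "measure M C = 0")
      case False
      then have p: "measure M C > 0" using measure_nonneg[of M C] by linarith
      have "measure M C \<le> measure M B0" using B0 bf gf C by (intro finite_measure_mono) auto
      then have "ln (measure M C) \<le> ln (measure M B0)" using p by simp
      then show ?thesis using p by (simp add: mult_left_mono)
    qed simp
    then show ?thesis using e by simp
  qed
  have "(\<Sum>B\<in>b. measure M B * ln (measure M B)) = (\<Sum>B\<in>b. \<Sum>C\<in>g. measure M (B \<inter> C) * ln (measure M B))"
    using 1 by (simp add: sum_distrib_right)
  also have "\<dots> = (\<Sum>C\<in>g. \<Sum>B\<in>b. measure M (B \<inter> C) * ln (measure M B))"
    by (rule sum.swap)
  also have "\<dots> \<ge> (\<Sum>C\<in>g. measure M C * ln (measure M C))"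
    using 2 by (intro sum_mono) auto
  finally show ?thesis unfolding part_entropy_def by simp
qed


lemma construct:
  fixes r u :: "nat \<Rightarrow> real"
  assumes fm: "finite_measure M" and Kp: "\<forall>\<alpha>\<in>K. fin_partition M \<alpha>" and k0: "k0 \<in> K"
    and G: "\<forall>k (N::nat). \<exists>(n::nat) b. n \<ge> 1 \<and> (\<forall>i\<in>{1..n}. b i \<in> K) \<and>
             u k * real n < part_entropy M (join_upto M b n) \<and> r k * real N < (u k - r k) * real n"
    and mr: "mono r"
  shows "\<exists>a\<in>seqs_in K. \<forall>y. (\<exists>k. y < r k) \<longrightarrow>
            (\<forall>N0. \<exists>N\<ge>N0. y < part_entropy M (join_upto M a N) / real N)"
proof -
  obtain nn :: "nat \<Rightarrow> nat \<Rightarrow> nat" and bb where P: "\<And>k N. nn k N \<ge> 1 \<and> (\<forall>i\<in>{1..nn k N}. bb k N i \<in> K) \<and>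
      u k * real (nn k N) < part_entropy M (join_upto M (bb k N) (nn k N)) \<and> r k * real N < (u k - r k) * real (nn k N)"
    using G by metis
  define T where "T = rec_nat 0 (\<lambda>k t. t + nn k t)"
  have T0: "T 0 = 0" and TS: "\<And>k. T (Suc k) = T k + nn k (T k)" unfolding T_def by simp_all
  define S where "S = rec_nat (\<lambda>i. k0) (\<lambda>k s. \<lambda>i. if i \<le> T k then s i else bb k (T k) (i - T k))"
  have SS: "\<And>k. S (Suc k) = (\<lambda>i. if i \<le> T k then S k i else bb k (T k) (i - T k))"
    unfolding S_def by simp
  have Tk: "k \<le> T k" for k
  proof (induction k)
    case (Suc k) then show ?case using TS[of k] P[of k "T k"] by simp
  qed simp
  have Tmono: "T k \<le> T (k + j)" for k j
  proof (induction j)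
    case (Suc j) then show ?case using TS[of "k+j"] by simp
  qed simp
  have Sstab: "i \<le> T k \<Longrightarrow> S (k + j) i = S k i" for i k j
  proof (induction j)
    case (Suc j)
    have "i \<le> T (k + j)" using Suc.prems Tmono[of k j] by simp
    then show ?case using Suc by (simp add: SS)
  qed simp
  have SK: "\<forall>i\<in>{1..T k}. S k i \<in> K" for k
  proof (induction k)
    case 0 then show ?case by (simp add: T0)
  next
    case (Suc k)
    show ?case
    proof
      fix i assume i: "i \<in> {1..T (Suc k)}"
      show "S (Suc k) i \<in> K"
      proof (cases "i \<le> T k")
        case True then show ?thesis using Suc i by (simp add: SS)
      next
        case False
        then have "i - T k \<in> {1..nn k (T k)}" using i TS[of k] by auto
        then show ?thesis using False P[of k "T k"] by (simp add: SS)
      qed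
    qed
  qed
  define a where "a i = S i i" for i
  have aeq: "i \<le> T k \<Longrightarrow> a i = S k i" for i k
  proof (cases "k \<le> i")
    case True
    assume "i \<le> T k"
    then show ?thesis using Sstab[of i k "i - k"] True by (simp add: a_def)
  next
    case False
    have "i \<le> T i" by (rule Tk)
    then show ?thesis using Sstab[of i i "k - i"] False by (simp add: a_def)
  qed
  have aK: "a \<in> seqs_in K"
    unfolding seqs_in_def
  proof (intro CollectI allI impI)
    fix i :: nat assume "1 \<le> i"
    then show "a i \<in> K" using SK[of i] Tk[of i] by (simp add: a_def)
  qed
  have aKi: "\<forall>i\<in>{1..n}. fin_partition M (a i)" for n
    using aK Kp by (auto simp: seqs_in_def)
  have block: "a (i + T k) = bb k (T k) i" if "i \<in> {1..nn k (T k)}" for i k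
  proof -
    have "i + T k \<le> T (Suc k)" using that TS[of k] by simp
    then have "a (i + T k) = S (Suc k) (i + T k)" by (rule aeq)
    then show ?thesis using that by (simp add: SS)
  qed
  have stage: "r k < part_entropy M (join_upto M a (T (Suc k))) / real (T (Suc k))" for k
  proof -
    let ?n = "nn k (T k)"
    have "join_upto M (\<lambda>i. a (i + T k)) ?n = join_upto M (bb k (T k)) ?n"
      using block by (intro join_upto_cong) auto
    moreover have "part_entropy M (join_upto M (\<lambda>i. a (i + T k)) ?n)
        \<le> part_entropy M (join_upto M a (T k + ?n))"
    proof (rule entropy_refine[OF fm])
      show "fin_partition M (join_upto M a (T k + ?n))" using aKi by (intro fp_join_upto) auto
      have "\<forall>i\<in>{1..?n}. fin_partition M (a (i + T k))"
        using aK Kp by (auto simp: seqs_in_def)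
      then show "fin_partition M (join_upto M (\<lambda>i. a (i + T k)) ?n)" by (intro fp_join_upto) auto
      show "\<forall>C\<in>join_upto M a (T k + ?n). \<exists>B\<in>join_upto M (\<lambda>i. a (i + T k)) ?n. C \<subseteq> B"
        by (rule join_refines)
    qed
    ultimately have H: "part_entropy M (join_upto M (bb k (T k)) ?n) \<le> part_entropy M (join_upto M a (T (Suc k)))"
      by (simp add: TS)
    have "r k * real (T (Suc k)) = r k * T k + r k * ?n" by (simp add: TS distrib_left)
    also have "\<dots> < u k * ?n" using P[of k "T k"] by (simp add: algebra_simps)
    also have "\<dots> < part_entropy M (join_upto M a (T (Suc k)))" using P[of k "T k"] H by simp
    finally have "r k * real (T (Suc k)) < part_entropy M (join_upto M a (T (Suc k)))" .
    moreover have "real (T (Suc k)) > 0" using Tk[of "Suc k"] by simp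
    ultimately show ?thesis by (simp add: pos_less_divide_eq)
  qed
  show ?thesis
  proof (intro bexI[OF _ aK] allI impI)
    fix y N0 assume "\<exists>k. y < r k"
    then obtain k1 where k1: "y < r k1" by blast
    let ?k = "max k1 N0"
    have "r k1 \<le> r ?k" using mr by (simp add: monoD)
    then have "y < part_entropy M (join_upto M a (T (Suc ?k))) / real (T (Suc ?k))"
      using stage[of ?k] k1 by linarith
    moreover have "N0 \<le> T (Suc ?k)" using Tk[of "Suc ?k"] by simp
    ultimately show "\<exists>N\<ge>N0. y < part_entropy M (join_upto M a N) / real N" by blast
  qed
qed


theorem lemma2p3:
  fixes M :: "'a::polish_space measure" and K :: "'a set set set"
  assumes "prob_space M"
    and "sets M = sets borel"
    and "K \<subseteq> {\<alpha>. fin_partition M \<alpha>}"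
    and "K \<noteq> {}"
  shows "hstar M K = (SUP a \<in> seqs_in K. seq_entropy M a)
         \<and> (\<exists>a\<in>seqs_in K. hstar M K = seq_entropy M a)"
proof -
  interpret prob_space M by fact
  have fm: "finite_measure M" by unfold_locales
  have Kp: "\<forall>\<alpha>\<in>K. fin_partition M \<alpha>" using assms(3) by auto
  obtain k0 where k0: "k0 \<in> K" using assms(4) by blast
  define c where "c = hstar M K"
  have E: "seq_entropy M a \<le> c" if aK: "a \<in> seqs_in K" for a
    unfolding seq_entropy_def c_def hstar_def
  proof (rule Limsup_mono)
    show "\<forall>\<^sub>F n in sequentially. ereal (part_entropy M (join_upto M a n) / real n) \<le> Pstar M K n / ereal (real n)"
      unfolding eventually_sequentially
    proof (intro exI allI impI)
      fix n :: nat assume n: "1 \<le> n"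
      have "ereal (part_entropy M (join_upto M a n)) \<le> Pstar M K n"
        unfolding Pstar_def using aK by (intro SUP_upper) (auto simp: seqs_in_def)
      then have "ereal (part_entropy M (join_upto M a n)) / ereal (real n) \<le> Pstar M K n / ereal (real n)"
        using n by (intro ereal_divide_right_mono) auto
      then show "ereal (part_entropy M (join_upto M a n) / real n) \<le> Pstar M K n / ereal (real n)"
        using n by simp
    qed
  qed
  have G: "\<exists>n\<ge>N0. n \<ge> 1 \<and> (\<exists>b. (\<forall>i\<in>{1..n}. b i \<in> K) \<and> y * real n < part_entropy M (join_upto M b n))"
    if y: "ereal y < c" for y N0
  proof -
    have "ereal y < (INF N. SUP m\<in>{N..}. Pstar M K m / ereal (real m))"
      using y unfolding c_def hstar_def limsup_INF_SUP .
    then have "ereal y < (SUP m\<in>{max N0 1..}. Pstar M K m / ereal (real m))"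
      by (rule less_INF_D) simp
    then obtain m where m: "m \<ge> max N0 1" "ereal y < Pstar M K m / ereal (real m)"
      by (auto simp: less_SUP_iff)
    have "ereal (y * real m) < Pstar M K m"
    proof (rule ccontr)
      assume "\<not> ereal (y * real m) < Pstar M K m"
      then have "Pstar M K m \<le> ereal (y * real m)" by simp
      then have "Pstar M K m / ereal (real m) \<le> ereal (y * real m) / ereal (real m)"
        using m by (intro ereal_divide_right_mono) auto
      also have "\<dots> = ereal y" using m by simp
      finally show False using m by simp
    qed
    then obtain b where "b \<in> {a. \<forall>i\<in>{1..m}. a i \<in> K}"
        "ereal (y * real m) < ereal (part_entropy M (join_upto M b m))"
      unfolding Pstar_def by (auto simp: less_SUP_iff)
    then show ?thesis using m by auto
  qed
  have main: "\<exists>a\<in>seqs_in K. c \<le> seq_entropy M a"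
  proof (cases "c = -\<infinity>")
    case True
    have "(\<lambda>i. k0) \<in> seqs_in K" using k0 by (simp add: seqs_in_def)
    then show ?thesis using True by auto
  next
    case False
    obtain r u :: "nat \<Rightarrow> real" where ru: "\<And>k. r k < u k" "\<And>k. ereal (u k) < c" "mono r"
      "\<And>y. ereal y < c \<Longrightarrow> \<exists>k. y < r k"
    proof (cases c)
      case (real x)
      let ?r = "\<lambda>k::nat. x - 2 / (real k + 1)" and ?u = "\<lambda>k::nat. x - 1 / (real k + 1)"
      show ?thesis
      proof (rule that[of ?r ?u])
        show "?r k < ?u k" for k by (simp add: divide_strict_right_mono)
        show "ereal (?u k) < c" for k using real by simp
        show "mono ?r"
          by (rule monoI) (simp add: frac_le)
        show "\<exists>k. y < ?r k" if "ereal y < c" for y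
        proof -
          have d: "0 < x - y" using that real by simp
          obtain n :: nat where n: "2 < real n * (x - y)" using ex_less_of_nat_mult[OF d] by blast
          have "2 < (real n + 1) * (x - y)" using n d by (simp add: algebra_simps)
          then have "2 / (real n + 1) < x - y" by (simp add: divide_less_eq mult.commute)
          then show ?thesis by (intro exI[of _ n]) simp
        qed
      qed
    next
      case PInf
      show ?thesis
      proof (rule that[of real "\<lambda>k. real k + 1"])
        show "mono real" by (rule monoI) simp
        show "\<exists>k. y < real k" for y using reals_Archimedean2 by blast
      qed (use PInf in auto)
    next
      case MInf then show ?thesis using False by simp
    qed
    have G2: "\<forall>k (N::nat). \<exists>(n::nat) b. n \<ge> 1 \<and> (\<forall>i\<in>{1..n}. b i \<in> K) \<and>
             u k * real n < part_entropy M (join_upto M b n) \<and> r k * real N < (u k - r k) * real n"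
    proof (intro allI)
      fix k N
      have d: "0 < u k - r k" using ru(1)[of k] by simp
      define N0 where "N0 = nat \<lceil>r k * real N / (u k - r k)\<rceil> + 1"
      obtain n b where nb: "n \<ge> N0" "n \<ge> 1" "\<forall>i\<in>{1..n}. b i \<in> K"
        "u k * real n < part_entropy M (join_upto M b n)"
        using G[OF ru(2)[of k], of N0] by blast
      have "r k * real N / (u k - r k) < real N0" unfolding N0_def by linarith
      also have "\<dots> \<le> real n" using nb by simp
      finally have "r k * real N < (u k - r k) * real n" using d by (simp add: pos_divide_less_eq mult.commute)
      then show "\<exists>(n::nat) b. n \<ge> 1 \<and> (\<forall>i\<in>{1..n}. b i \<in> K) \<and>
             u k * real n < part_entropy M (join_upto M b n) \<and> r k * real N < (u k - r k) * real n"
        using nb by blast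
    qed
    obtain a where aK: "a \<in> seqs_in K" and fr: "\<And>y N0. (\<exists>k. y < r k) \<Longrightarrow>
            \<exists>N\<ge>N0. y < part_entropy M (join_upto M a N) / real N"
      using construct[OF fm Kp k0 G2 ru(3)] by blast
    have "c \<le> seq_entropy M a"
      unfolding seq_entropy_def limsup_INF_SUP
    proof (rule dense_le)
      fix x assume x: "x < c"
      show "x \<le> (INF n. SUP m\<in>{n..}. ereal (part_entropy M (join_upto M a m) / real m))"
      proof (cases x)
        case (real y)
        then have ex: "\<exists>k. y < r k" using ru(4) x by simp
        show ?thesis
        proof (rule INF_greatest)
          fix N0 :: nat
          obtain N where N: "N \<ge> N0" "y < part_entropy M (join_upto M a N) / real N"
            using fr[OF ex] by blast
          have "x \<le> ereal (part_entropy M (join_upto M a N) / real N)" using N real by simp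
          also have "\<dots> \<le> (SUP m\<in>{N0..}. ereal (part_entropy M (join_upto M a m) / real m))"
            using N by (intro SUP_upper) simp
          finally show "x \<le> (SUP m\<in>{N0..}. ereal (part_entropy M (join_upto M a m) / real m))" .
        qed
      qed (use x in auto)
    qed
    then show ?thesis using aK by blast
  qed
  then obtain a where aK: "a \<in> seqs_in K" and ca: "c \<le> seq_entropy M a" by blast
  have eq: "c = seq_entropy M a" using E[OF aK] ca by simp
  have "(SUP a \<in> seqs_in K. seq_entropy M a) = c"
  proof (rule antisym)
    show "(SUP a \<in> seqs_in K. seq_entropy M a) \<le> c" using E by (intro SUP_least) auto
    show "c \<le> (SUP a \<in> seqs_in K. seq_entropy M a)" using eq aK by (metis SUP_upper)
  qed
  then show ?thesis using eq aK unfolding c_def by auto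
qed

end
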